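(* Let $S(p)$ be a projectively non-degenerate oriented polyhedral $2$-surface in $\mathbb{R}^3$ with vertices $p_i$, and let $\omega_{ij}$ be the projective lifting coefficients associated to $S$. Then for every vertex $p_i$ of $S$, \[ \sum_{j:\ p_ip_j\text{ an edge of } S}\omega_{ij}\,dp_i\wedge dp_j=0\quad\text{in }\Lambda^2(\mathbb{R}^3), \] i.e. the projective stress $\Psi_{ij}=\omega_{ij}\,dp_i\wedge dp_j$ on the projective framework in $\mathbb{R}P^2$ with vertices $\hat p_i=[p_i]$ and the edges of $S$ is a self-stress.
   Context: $O$ is the origin of $\mathbb{R}^3$; for $p=(a_1,a_2,a_3)\in\mathbb{R}^3$, $dp=a_1dx_1+a_2dx_2+a_3dx_3$, and $\Lambda^2(\mathbb{R}^3)$ is the space of exterior $2$-forms. $\det(u,v,w)$ is the determinant of the matrix with columns $u,v,w$. For $p_1,\dots,p_4$ with affine spans ${\rm span}(p_1,p_2,p_3)$, ${\rm span}(p_1,p_2,p_4)$ two-dimensional and not containing $O$, set $\omega(p_1,p_2;p_3,p_4)=\det(p_2-p_1,p_3-p_1,p_4-p_1)/(\det(p_1,p_2,p_3)\det(p_1,p_2,p_4))$ (it depends only on $p_1,p_2$ and the two planes). $S(p)$ is projectively non-degenerate if the planes of its faces avoid $O$. For an edge oriented as $\overrightarrow{p_ip_j}$, the orientation of $S$ determines a left and a right adjacent face; with $p_k$ a point of the right face and $p_l$ a point of the left face, both off the edge line, $\omega_{ij}=\omega(p_i,p_j;p_k,p_l)$ (independent of choices and symmetric in $i,j$). *)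

theory Defs
  imports "HOL-Analysis.Analysis"
begin

definition det3 :: "real^3 \<Rightarrow> real^3 \<Rightarrow> real^3 \<Rightarrow> real" where
  "det3 u v w = det (\<chi> r c. (if c = 1 then u else if c = 2 then v else w) $ r)"

definition omega :: "real^3 \<Rightarrow> real^3 \<Rightarrow> real^3 \<Rightarrow> real^3 \<Rightarrow> real" where
  "omega p1 p2 p3 p4 =
     det3 (p2 - p1) (p3 - p1) (p4 - p1) / (det3 p1 p2 p3 * det3 p1 p2 p4)"

text \<open>The exterior 2-form dp \<and> dq on R^3, as an alternating bilinear form
  (Lambda^2(R^3) identified with alternating bilinear forms on R^3):
  (dp \<and> dq)(x,y) = dp(x) dq(y) - dp(y) dq(x), where dp(x) = p \<bullet> x.\<close>
definition wedge2 :: "real^3 \<Rightarrow> real^3 \<Rightarrow> real^3 \<Rightarrow> real^3 \<Rightarrow> real" where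
  "wedge2 u v = (\<lambda>x y. (u \<bullet> x) * (v \<bullet> y) - (u \<bullet> y) * (v \<bullet> x))"

text \<open>A face is an oriented polygon given by a cyclic list of vertices;
  its directed edges are consecutive pairs (cyclically).\<close>
definition dedges :: "'v list \<Rightarrow> ('v \<times> 'v) set" where
  "dedges f = {(f ! n, f ! (Suc n mod length f)) | n. n < length f}"

definition vertices :: "'v list set \<Rightarrow> 'v set" where
  "vertices F = \<Union> (set ` F)"

definition star_adj :: "'v list set \<Rightarrow> 'v \<Rightarrow> ('v list \<times> 'v list) set" where
  "star_adj F i = {(f, g). f \<in> F \<and> g \<in> F \<and> (\<exists>j. (i, j) \<in> dedges f \<and> (j, i) \<in> dedges g)}"

text \<open>Closed oriented polyhedral 2-surface: finitely many oriented polygonal faces,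
  every edge lies in exactly two faces which induce opposite orientations on it,
  and the faces around every vertex form a single cycle (disc neighbourhood).\<close>
definition oriented_surface :: "'v list set \<Rightarrow> bool" where
  "oriented_surface F \<longleftrightarrow>
     finite F \<and>
     (\<forall>f\<in>F. distinct f \<and> 3 \<le> length f) \<and>
     (\<forall>f\<in>F. \<forall>g\<in>F. \<forall>e. e \<in> dedges f \<and> e \<in> dedges g \<longrightarrow> f = g) \<and>
     (\<forall>f\<in>F. \<forall>i j. (i, j) \<in> dedges f \<longrightarrow> (\<exists>g\<in>F. (j, i) \<in> dedges g)) \<and>
     (\<forall>i. \<forall>f\<in>F. \<forall>g\<in>F. i \<in> set f \<and> i \<in> set g \<longrightarrow> (f, g) \<in> (star_adj F i)\<^sup>*)"

definition proj_nondeg_realization :: "'v list set \<Rightarrow> ('v \<Rightarrow> real^3) \<Rightarrow> bool" where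
  "proj_nondeg_realization F p \<longleftrightarrow>
     inj_on p (vertices F) \<and>
     (\<forall>f\<in>F. aff_dim (p ` set f) = 2 \<and> 0 \<notin> affine hull (p ` set f))"

definition left_face :: "'v list set \<Rightarrow> 'v \<Rightarrow> 'v \<Rightarrow> 'v list" where
  "left_face F i j = (THE f. f \<in> F \<and> (i, j) \<in> dedges f)"

definition right_face :: "'v list set \<Rightarrow> 'v \<Rightarrow> 'v \<Rightarrow> 'v list" where
  "right_face F i j = (THE g. g \<in> F \<and> (j, i) \<in> dedges g)"

definition omega_edge :: "'v list set \<Rightarrow> ('v \<Rightarrow> real^3) \<Rightarrow> 'v \<Rightarrow> 'v \<Rightarrow> real" where
  "omega_edge F p i j =
     omega (p i) (p j)
       (p (SOME k. k \<in> set (right_face F i j) \<and> p k \<notin> affine hull {p i, p j}))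
       (p (SOME l. l \<in> set (left_face F i j) \<and> p l \<notin> affine hull {p i, p j}))"

definition nbrs :: "'v list set \<Rightarrow> 'v \<Rightarrow> 'v set" where
  "nbrs F i = {j. \<exists>f\<in>F. (i, j) \<in> dedges f \<or> (j, i) \<in> dedges f}"

end

theory Submission imports Defs "HOL-Analysis.Cross3" begin
unbundle cross3_syntax

lemma det3_cross: "det3 u v w = u \<bullet> (v \<times> w)"
  unfolding det3_def by (simp add: cross3_simps forall_3)

lemma wedge_cross: "wedge2 u v x y = (u \<times> v) \<bullet> (x \<times> y)"
  unfolding wedge2_def by (simp add: cross3_simps forall_3)

lemma plane_normal:
  assumes "a \<bullet> p = 1" "a \<bullet> q = 1" "a \<bullet> r = 1"
  shows "det3 p q r *\<^sub>R a = (q - p) \<times> (r - p)"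
proof -
  have "det3 p q r *\<^sub>R a = (a \<bullet> p) *\<^sub>R (q \<times> r) + (a \<bullet> q) *\<^sub>R (r \<times> p) + (a \<bullet> r) *\<^sub>R (p \<times> q)"
    unfolding det3_def by (simp add: cross3_simps forall_3)
  also have "\<dots> = (q - p) \<times> (r - p)" using assms by (simp add: cross3_simps forall_3)
  finally show ?thesis .
qed

lemma omega_identity:
  assumes "aR \<bullet> qi = 1" "aR \<bullet> qj = 1" "aR \<bullet> qk = 1"
    "aL \<bullet> qi = 1" "aL \<bullet> qj = 1" "aL \<bullet> ql = 1"
    "det3 qi qj qk \<noteq> 0" "det3 qi qj ql \<noteq> 0"
  shows "omega qi qj qk ql *\<^sub>R (qi \<times> qj) = aR - aL"
proof -
  define c where "c = det3 qi qj qk * det3 qi qj ql"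
  define d where "d = det3 (qj - qi) (qk - qi) (ql - qi)"
  have R: "det3 qi qj qk *\<^sub>R aR = (qj - qi) \<times> (qk - qi)" using assms plane_normal by blast
  have L: "det3 qi qj ql *\<^sub>R aL = (qj - qi) \<times> (ql - qi)" using assms plane_normal by blast
  have "(det3 qi qj qk * det3 qi qj ql) *\<^sub>R (aR - aL)
      = det3 qi qj ql *\<^sub>R (det3 qi qj qk *\<^sub>R aR) - det3 qi qj qk *\<^sub>R (det3 qi qj ql *\<^sub>R aL)"
    by (simp add: algebra_simps)
  also have "\<dots> = det3 (qj - qi) (qk - qi) (ql - qi) *\<^sub>R (qi \<times> qj)"
    unfolding R L unfolding det3_def by (simp add: cross3_simps forall_3)
  finally have "(det3 qi qj qk * det3 qi qj ql) *\<^sub>R (aR - aL) = det3 (qj - qi) (qk - qi) (ql - qi) *\<^sub>R (qi \<times> qj)" .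
  then have eq: "c *\<^sub>R (aR - aL) = d *\<^sub>R (qi \<times> qj)"
    unfolding c_def d_def .
  have c0: "c \<noteq> 0" unfolding c_def using assms(7,8) by simp
  have "aR - aL = inverse c *\<^sub>R (c *\<^sub>R (aR - aL))" using c0 by simp
  also have "\<dots> = inverse c *\<^sub>R (d *\<^sub>R (qi \<times> qj))" using eq by simp
  also have "\<dots> = (d / c) *\<^sub>R (qi \<times> qj)" by (simp add: divide_inverse mult.commute)
  finally show ?thesis unfolding omega_def c_def d_def by simp
qed

lemma suc_mod_inj:
  assumes "m < n" "m' < n" "Suc m mod n = Suc m' mod n" shows "m = m'"
  using assms by (cases "Suc m = n"; cases "Suc m' = n") auto

lemma dedges_mem:
  assumes "(a, b) \<in> dedges f" shows "a \<in> set f \<and> b \<in> set f"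
proof -
  obtain n where n: "n < length f" "a = f ! n" "b = f ! (Suc n mod length f)"
    using assms unfolding dedges_def by auto
  have "Suc n mod length f < length f" using n(1) by (intro mod_less_divisor) linarith
  then show ?thesis using n by simp
qed

lemma dedges_neq:
  assumes "distinct f" "2 \<le> length f" "(a, b) \<in> dedges f" shows "a \<noteq> b"
proof -
  obtain n where n: "n < length f" "a = f ! n" "b = f ! (Suc n mod length f)"
    using assms(3) unfolding dedges_def by auto
  have "Suc n mod length f \<noteq> n"
    using n(1) assms(2) by (cases "Suc n = length f") auto
  moreover have "Suc n mod length f < length f" using n(1) by (intro mod_less_divisor) linarith
  ultimately show ?thesis using n assms(1) by (simp add: nth_eq_iff_index_eq)
qed

lemma dedges_out_unique:
  assumes "distinct f" "(a, b) \<in> dedges f" "(a, b') \<in> dedges f" shows "b = b'"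
proof -
  obtain n where n: "n < length f" "a = f ! n" "b = f ! (Suc n mod length f)"
    using assms(2) unfolding dedges_def by auto
  obtain n' where n': "n' < length f" "a = f ! n'" "b' = f ! (Suc n' mod length f)"
    using assms(3) unfolding dedges_def by auto
  have "n = n'" using n n' assms(1) by (simp add: nth_eq_iff_index_eq)
  then show ?thesis using n n' by simp
qed

lemma dedges_in_unique:
  assumes "distinct f" "(a, b) \<in> dedges f" "(a', b) \<in> dedges f" shows "a = a'"
proof -
  obtain n where n: "n < length f" "a = f ! n" "b = f ! (Suc n mod length f)"
    using assms(2) unfolding dedges_def by auto
  obtain n' where n': "n' < length f" "a' = f ! n'" "b = f ! (Suc n' mod length f)"
    using assms(3) unfolding dedges_def by auto
  have "Suc n mod length f < length f" "Suc n' mod length f < length f"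
    using n(1) n'(1) by (intro mod_less_divisor; linarith)+
  then have "Suc n mod length f = Suc n' mod length f"
    using n n' assms(1) nth_eq_iff_index_eq by metis
  then have "n = n'" using suc_mod_inj n(1) n'(1) by blast
  then show ?thesis using n n' by simp
qed

lemma dedges_out_ex: "a \<in> set f \<Longrightarrow> \<exists>b. (a, b) \<in> dedges f"
  unfolding dedges_def by (auto simp: in_set_conv_nth)

lemma dedges_in_ex:
  assumes "a \<in> set f" shows "\<exists>b. (b, a) \<in> dedges f"
proof -
  obtain n where n: "n < length f" "a = f ! n" using assms by (auto simp: in_set_conv_nth)
  define m where "m = (if n = 0 then length f - 1 else n - 1)"
  have m: "m < length f" "Suc m mod length f = n" using n(1) unfolding m_def by auto
  then show ?thesis unfolding dedges_def using n(2) by force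
qed

lemma face_normal:
  fixes S :: "(real^3) set"
  assumes "aff_dim S = 2" "0 \<notin> affine hull S"
  shows "\<exists>a. \<forall>x\<in>S. a \<bullet> x = 1"
proof -
  have "DIM(real^3) = 3" by simp
  then have "aff_dim S = int (DIM(real^3) - 1)" using assms(1) by simp
  from aff_dim_eq_hyperplane[THEN iffD1, OF this]
  obtain c b where cb: "c \<noteq> 0" "affine hull S = {x. c \<bullet> x = b}" by blast
  have b: "b \<noteq> 0"
  proof
    assume "b = 0"
    then have "0 \<in> affine hull S" unfolding cb(2) by simp
    then show False using assms(2) by contradiction
  qed
  have "\<forall>x\<in>S. (c /\<^sub>R b) \<bullet> x = 1"
  proof
    fix x assume "x \<in> S"
    then have "x \<in> affine hull S" by (rule hull_inc)
    then have "c \<bullet> x = b" unfolding cb(2) by simp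
    then show "(c /\<^sub>R b) \<bullet> x = 1" using b by simp
  qed
  then show ?thesis by blast
qed

lemma off_line:
  fixes S :: "(real^3) set"
  assumes "finite S" "aff_dim S = 2"
  shows "\<exists>x\<in>S. x \<notin> affine hull {u, v}"
proof (rule ccontr)
  assume "\<not> ?thesis"
  then have "S \<subseteq> affine hull {u, v}" by blast
  then have "aff_dim S \<le> aff_dim (affine hull {u, v})" by (rule aff_dim_subset)
  also have "\<dots> = aff_dim {u, v}" by (rule aff_dim_affine_hull)
  also have "\<dots> \<le> of_nat (card {u, v}) - 1" by (rule aff_dim_le_card) simp
  also have "\<dots> \<le> 1" by (cases "u = v") simp_all
  finally show False using assms(2) by simp
qed

lemma det_nonzero:
  assumes "a \<bullet> u = 1" "a \<bullet> v = 1" "a \<bullet> w = 1" "u \<noteq> v" "w \<notin> affine hull {u, v}"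
  shows "det3 u v w \<noteq> 0"
proof
  assume d0: "det3 u v w = 0"
  have "(v - u) \<times> (w - u) = det3 u v w *\<^sub>R a" using plane_normal[OF assms(1-3)] by (rule sym)
  also have "\<dots> = 0" unfolding d0 by (rule scaleR_zero_left)
  finally have "(v - u) \<times> (w - u) = 0" .
  then have "collinear {0, v - u, w - u}" unfolding cross_eq_0 .
  then have "v - u = 0 \<or> w - u = 0 \<or> (\<exists>c. w - u = c *\<^sub>R (v - u))" unfolding collinear_lemma .
  moreover have "v - u \<noteq> 0" using assms(4) by simp
  ultimately have "w - u = 0 \<or> (\<exists>c. w - u = c *\<^sub>R (v - u))" by blast
  then show False
  proof
    assume "w - u = 0"
    then have "w = u" by simp
    then have "w \<in> affine hull {u, v}" by (simp add: hull_inc)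
    then show False using assms(5) by blast
  next
    assume "\<exists>c. w - u = c *\<^sub>R (v - u)"
    then obtain c where "w - u = c *\<^sub>R (v - u)" by blast
    then have w: "w = (1 - c) *\<^sub>R u + c *\<^sub>R v" by (simp add: algebra_simps)
    have "(1 - c) + c = (1::real)" by simp
    then have "w \<in> {a *\<^sub>R u + b *\<^sub>R v |a b. a + b = 1}" unfolding w by blast
    then have "w \<in> affine hull {u, v}" unfolding affine_hull_2 .
    then show False using assms(5) by blast
  qed
qed

theorem theorem3p5:
  fixes F :: "'v list set" and p :: "'v \<Rightarrow> real^3" and i :: 'v
  assumes "oriented_surface F"
    and "proj_nondeg_realization F p"
    and "i \<in> vertices F"
  shows "(\<lambda>x y. \<Sum>j\<in>nbrs F i. omega_edge F p i j * wedge2 (p i) (p j) x y) = (\<lambda>x y. 0)"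
proof -
  note os = assms(1)[unfolded oriented_surface_def]
  have fin: "finite F" using conjunct1[OF os] .
  note os2 = conjunct1[OF conjunct2[OF os]]
  note os3 = conjunct1[OF conjunct2[OF conjunct2[OF os]]]
  note os4 = conjunct1[OF conjunct2[OF conjunct2[OF conjunct2[OF os]]]]
  have dl: "\<And>f. f \<in> F \<Longrightarrow> distinct f \<and> 3 \<le> length f" using os2 by blast
  have uq: "\<And>f g e. f \<in> F \<Longrightarrow> g \<in> F \<Longrightarrow> e \<in> dedges f \<Longrightarrow> e \<in> dedges g \<Longrightarrow> f = g"
    using os3 by blast
  have op: "\<And>f a b. f \<in> F \<Longrightarrow> (a, b) \<in> dedges f \<Longrightarrow> \<exists>g\<in>F. (b, a) \<in> dedges g"
    using os4 by blast
  note pn = assms(2)[unfolded proj_nondeg_realization_def]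
  note inj = conjunct1[OF pn]
  note pn2 = conjunct2[OF pn]
  have fd: "\<And>f. f \<in> F \<Longrightarrow> aff_dim (p ` set f) = 2 \<and> 0 \<notin> affine hull (p ` set f)"
    using pn2 by blast
  define N where "N f = (SOME a. \<forall>v\<in>set f. a \<bullet> p v = 1)" for f
  have N: "N f \<bullet> p v = 1" if fF: "f \<in> F" and vf: "v \<in> set f" for f v
  proof -
    have fdf: "aff_dim (p ` set f) = 2" "0 \<notin> affine hull (p ` set f)" using fd[OF fF] by auto
    obtain a where "\<forall>x\<in>p ` set f. a \<bullet> x = 1" using face_normal[OF fdf] by blast
    then have "\<exists>a. \<forall>v\<in>set f. a \<bullet> p v = 1" by auto
    then have "\<forall>v\<in>set f. N f \<bullet> p v = 1" unfolding N_def by (rule someI_ex)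
    then show ?thesis using vf by blast
  qed
  have lf: "left_face F a b = f" if "f \<in> F" "(a, b) \<in> dedges f" for f a b
    unfolding left_face_def by (rule the_equality) (use that uq in blast)+
  have rf: "right_face F a b = g" if "g \<in> F" "(b, a) \<in> dedges g" for g a b
    unfolding right_face_def by (rule the_equality) (use that uq in blast)+
  have nb: "\<exists>f\<in>F. \<exists>g\<in>F. (i, j) \<in> dedges f \<and> (j, i) \<in> dedges g" if jn: "j \<in> nbrs F i" for j
  proof -
    obtain h where h: "h \<in> F" "(i, j) \<in> dedges h \<or> (j, i) \<in> dedges h" using jn unfolding nbrs_def by blast
    then show ?thesis using op[OF h(1)] by blast
  qed
  have vert: "v \<in> vertices F" if "f \<in> F" "v \<in> set f" for f v
    using that unfolding vertices_def by blast
  have edge: "omega_edge F p i j *\<^sub>R (p i \<times> p j) = N (right_face F i j) - N (left_face F i j)"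
    if jn: "j \<in> nbrs F i" for j
  proof -
    obtain f g where fg: "f \<in> F" "g \<in> F" "(i, j) \<in> dedges f" "(j, i) \<in> dedges g"
      using nb[OF jn] by blast
    have L: "left_face F i j = f" using lf[OF fg(1) fg(3)] .
    have R: "right_face F i j = g" using rf[OF fg(2) fg(4)] .
    have ijf: "i \<in> set f" "j \<in> set f" using dedges_mem[OF fg(3)] by auto
    have ijg: "i \<in> set g" "j \<in> set g" using dedges_mem[OF fg(4)] by auto
    have "i \<noteq> j" using dedges_neq[OF conjunct1[OF dl[OF fg(1)]] _ fg(3)] dl[OF fg(1)] by linarith
    then have pij: "p i \<noteq> p j" using inj_onD[OF inj _ vert[OF fg(1) ijf(1)] vert[OF fg(1) ijf(2)]] by blast
    have "\<exists>x\<in>p ` set g. x \<notin> affine hull {p i, p j}" by (rule off_line) (simp_all add: fd[OF fg(2)])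
    then have ek: "\<exists>k. k \<in> set g \<and> p k \<notin> affine hull {p i, p j}" by blast
    define k where "k = (SOME k. k \<in> set g \<and> p k \<notin> affine hull {p i, p j})"
    have K: "k \<in> set g \<and> p k \<notin> affine hull {p i, p j}" unfolding k_def using ek by (rule someI_ex)
    have "\<exists>x\<in>p ` set f. x \<notin> affine hull {p i, p j}" by (rule off_line) (simp_all add: fd[OF fg(1)])
    then have el: "\<exists>l. l \<in> set f \<and> p l \<notin> affine hull {p i, p j}" by blast
    define l where "l = (SOME l. l \<in> set f \<and> p l \<notin> affine hull {p i, p j})"
    have Lk: "l \<in> set f \<and> p l \<notin> affine hull {p i, p j}" unfolding l_def using el by (rule someI_ex)
    have om: "omega_edge F p i j = omega (p i) (p j) (p k) (p l)"
      unfolding omega_edge_def L R k_def l_def ..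
    have dk: "det3 (p i) (p j) (p k) \<noteq> 0"
      by (rule det_nonzero[of "N g"]) (simp_all add: N[OF fg(2)] ijg K pij)
    have dl': "det3 (p i) (p j) (p l) \<noteq> 0"
      by (rule det_nonzero[of "N f"]) (simp_all add: N[OF fg(1)] ijf Lk pij)
    show ?thesis unfolding om L R
      by (rule omega_identity) (use N[OF fg(2)] N[OF fg(1)] ijg ijf K Lk dk dl' in auto)
  qed
  define Fi where "Fi = {f\<in>F. i \<in> set f}"
  have bL: "bij_betw (\<lambda>j. left_face F i j) (nbrs F i) Fi"
    unfolding bij_betw_def
  proof (intro conjI)
    show "inj_on (\<lambda>j. left_face F i j) (nbrs F i)"
    proof (rule inj_onI)
      fix j j' assume j: "j \<in> nbrs F i" "j' \<in> nbrs F i" "left_face F i j = left_face F i j'"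
      obtain f where f: "f \<in> F" "(i, j) \<in> dedges f" using nb[OF j(1)] by blast
      obtain f' where f': "f' \<in> F" "(i, j') \<in> dedges f'" using nb[OF j(2)] by blast
      have "f = f'" using lf[OF f] lf[OF f'] j(3) by simp
      then show "j = j'" using dedges_out_unique[OF conjunct1[OF dl[OF f(1)]] f(2)] f'(2) by simp
    qed
    show "(\<lambda>j. left_face F i j) ` nbrs F i = Fi"
    proof
      show "(\<lambda>j. left_face F i j) ` nbrs F i \<subseteq> Fi"
      proof
        fix h assume "h \<in> (\<lambda>j. left_face F i j) ` nbrs F i"
        then obtain j where j: "j \<in> nbrs F i" "h = left_face F i j" by blast
        obtain f where f: "f \<in> F" "(i, j) \<in> dedges f" using nb[OF j(1)] by blast
        show "h \<in> Fi" using lf[OF f] j(2) f(1) dedges_mem[OF f(2)] unfolding Fi_def by simp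
      qed
      show "Fi \<subseteq> (\<lambda>j. left_face F i j) ` nbrs F i"
      proof
        fix f assume "f \<in> Fi"
        then have f: "f \<in> F" "i \<in> set f" unfolding Fi_def by auto
        obtain j where j: "(i, j) \<in> dedges f" using dedges_out_ex[OF f(2)] by blast
        have "j \<in> nbrs F i" unfolding nbrs_def using f(1) j by blast
        then show "f \<in> (\<lambda>j. left_face F i j) ` nbrs F i" using lf[OF f(1) j] by force
      qed
    qed
  qed
  have bR: "bij_betw (\<lambda>j. right_face F i j) (nbrs F i) Fi"
    unfolding bij_betw_def
  proof (intro conjI)
    show "inj_on (\<lambda>j. right_face F i j) (nbrs F i)"
    proof (rule inj_onI)
      fix j j' assume j: "j \<in> nbrs F i" "j' \<in> nbrs F i" "right_face F i j = right_face F i j'"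
      obtain f where f: "f \<in> F" "(j, i) \<in> dedges f" using nb[OF j(1)] by blast
      obtain f' where f': "f' \<in> F" "(j', i) \<in> dedges f'" using nb[OF j(2)] by blast
      have "f = f'" using rf[OF f] rf[OF f'] j(3) by simp
      then show "j = j'" using dedges_in_unique[OF conjunct1[OF dl[OF f(1)]] f(2)] f'(2) by simp
    qed
    show "(\<lambda>j. right_face F i j) ` nbrs F i = Fi"
    proof
      show "(\<lambda>j. right_face F i j) ` nbrs F i \<subseteq> Fi"
      proof
        fix h assume "h \<in> (\<lambda>j. right_face F i j) ` nbrs F i"
        then obtain j where j: "j \<in> nbrs F i" "h = right_face F i j" by blast
        obtain f where f: "f \<in> F" "(j, i) \<in> dedges f" using nb[OF j(1)] by blast
        show "h \<in> Fi" using rf[OF f] j(2) f(1) dedges_mem[OF f(2)] unfolding Fi_def by simp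
      qed
      show "Fi \<subseteq> (\<lambda>j. right_face F i j) ` nbrs F i"
      proof
        fix f assume "f \<in> Fi"
        then have f: "f \<in> F" "i \<in> set f" unfolding Fi_def by auto
        obtain j where j: "(j, i) \<in> dedges f" using dedges_in_ex[OF f(2)] by blast
        have "j \<in> nbrs F i" unfolding nbrs_def using f(1) j by blast
        then show "f \<in> (\<lambda>j. right_face F i j) ` nbrs F i" using rf[OF f(1) j] by force
      qed
    qed
  qed
  have sR: "(\<Sum>j\<in>nbrs F i. N (right_face F i j)) = sum N Fi"
    using sum.reindex_bij_betw[OF bR, of N] by simp
  have sL: "(\<Sum>j\<in>nbrs F i. N (left_face F i j)) = sum N Fi"
    using sum.reindex_bij_betw[OF bL, of N] by simp
  have tot: "(\<Sum>j\<in>nbrs F i. omega_edge F p i j *\<^sub>R (p i \<times> p j)) = 0"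
  proof -
    have "(\<Sum>j\<in>nbrs F i. omega_edge F p i j *\<^sub>R (p i \<times> p j))
        = (\<Sum>j\<in>nbrs F i. N (right_face F i j) - N (left_face F i j))"
      using edge by (rule sum.cong[OF refl])
    also have "\<dots> = 0" unfolding sum_subtractf sR sL by simp
    finally show ?thesis .
  qed
  show ?thesis
  proof (intro ext)
    fix x y
    have "(\<Sum>j\<in>nbrs F i. omega_edge F p i j * wedge2 (p i) (p j) x y)
        = (\<Sum>j\<in>nbrs F i. (omega_edge F p i j *\<^sub>R (p i \<times> p j)) \<bullet> (x \<times> y))"
      by (rule sum.cong[OF refl]) (simp only: wedge_cross inner_scaleR_left)
    also have "\<dots> = (\<Sum>j\<in>nbrs F i. omega_edge F p i j *\<^sub>R (p i \<times> p j)) \<bullet> (x \<times> y)"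
      by (rule inner_sum_left[symmetric])
    also have "\<dots> = 0" unfolding tot by (rule inner_zero_left)
    finally show "(\<Sum>j\<in>nbrs F i. omega_edge F p i j * wedge2 (p i) (p j) x y) = 0" .
  qed
qed

end
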